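(* Let $r,s\ge 1$ and let $A_1,\dots,A_r$ be real $s\times s$ matrices with non-negative entries. Let $A$ be the $rs\times rs$ block circulant matrix \[ A = \begin{pmatrix} A_1 & A_2 & A_3 & \dots & A_r\\ A_r & A_1 & A_2 & \dots & A_{r-1}\\ A_{r-1} & A_r & A_1 & \dots & A_{r-2}\\ \vdots & & & & \vdots\\ A_2 & A_3 & A_4 & \dots & A_1 \end{pmatrix}. \] Then $\rho(A) = \rho\left(\sum_{i=1}^r A_i \right)$.
   Context: For a square matrix $M$, $\rho(M)$ denotes its spectral radius. *)

theory Defs
  imports "Jordan_Normal_Form.Spectral_Radius"
begin

text \<open>Block circulant matrix built from a family of s x s blocks indexed 0..r-1
  (block k here corresponds to A_(k+1) in the paper). Block (p,q) is block ((q - p) mod r).\<close>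
definition block_circulant :: "nat \<Rightarrow> nat \<Rightarrow> (nat \<Rightarrow> real mat) \<Rightarrow> real mat" where
  "block_circulant r s B =
     mat (r * s) (r * s) (\<lambda>(i, j).
       B (nat ((int (j div s) - int (i div s)) mod int r)) $$ (i mod s, j mod s))"

definition real_spectral_radius :: "real mat \<Rightarrow> real" where
  "real_spectral_radius M = spectral_radius (map_mat complex_of_real M)"

end

theory Submission
  imports Defs
begin

lemma block_sum:
  fixes f :: "nat \<Rightarrow> 'a :: comm_monoid_add"
  shows "(\<Sum>j<r*s. f j) = (\<Sum>q<r. \<Sum>b<s. f (q*s+b))"
proof -
  have "(\<Sum>j<r*s. f j) = (\<Sum>q<r. sum f {q*s..<q*s+s})"
    by (rule sum.nat_group[symmetric])
  also have "\<dots> = (\<Sum>q<r. \<Sum>b<s. f (q*s+b))"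
  proof (rule sum.cong[OF refl])
    fix q
    have "sum f {q*s..<q*s+s} = sum (\<lambda>b. f (b + q*s)) {0..<s}"
      using sum.shift_bounds_nat_ivl[of f 0 "q*s" s] by (simp add: add.commute)
    then show "sum f {q*s..<q*s+s} = (\<Sum>b<s. f (q*s+b))"
      by (simp add: atLeast0LessThan add.commute)
  qed
  finally show ?thesis .
qed

lemma rot_bij:
  assumes "q < r"
  shows "bij_betw (\<lambda>p. nat ((int q - int p) mod int r)) {..<r} {..<r}"
proof -
  let ?f = "\<lambda>p. nat ((int q - int p) mod int r)"
  have inj: "inj_on ?f {..<r}"
  proof (rule inj_onI)
    fix p p' assume p: "p \<in> {..<r}" and p': "p' \<in> {..<r}" and e: "?f p = ?f p'"
    have m: "(int q - int p) mod int r = (int q - int p') mod int r"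
      using e assms by (simp add: eq_nat_nat_iff)
    hence "(int p) mod int r = (int p') mod int r"
      using mod_diff_cong[of "int q" "int r" "int q", OF refl m] by simp
    thus "p = p'" using p p' by (simp add: zmod_int[symmetric])
  qed
  have sub: "?f ` {..<r} \<subseteq> {..<r}" using assms by (auto simp: nat_less_iff)
  have "?f ` {..<r} = {..<r}"
    using endo_inj_surj[OF _ sub inj] by simp
  thus ?thesis using inj by (simp add: bij_betw_def)
qed

lemma rot_bij2:
  assumes "p < r"
  shows "bij_betw (\<lambda>q. nat ((int q - int p) mod int r)) {..<r} {..<r}"
proof -
  let ?f = "\<lambda>q. nat ((int q - int p) mod int r)"
  have inj: "inj_on ?f {..<r}"
  proof (rule inj_onI)
    fix q q' assume q: "q \<in> {..<r}" and q': "q' \<in> {..<r}" and e: "?f q = ?f q'"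
    have m: "(int q - int p) mod int r = (int q' - int p) mod int r"
      using e assms by (simp add: eq_nat_nat_iff)
    hence "(int q) mod int r = (int q') mod int r"
      using mod_add_cong[of _ "int r" _ "int p" "int p", OF m refl] by simp
    thus "q = q'" using q q' by (simp add: zmod_int[symmetric])
  qed
  have sub: "?f ` {..<r} \<subseteq> {..<r}" using assms by (auto simp: nat_less_iff)
  have "?f ` {..<r} = {..<r}"
    using endo_inj_surj[OF _ sub inj] by simp
  thus ?thesis using inj by (simp add: bij_betw_def)
qed

lemma rot_sum1: assumes "q < r" shows "(\<Sum>p<r. g (nat ((int q - int p) mod int r))) = (\<Sum>k<r. g k)"
  using sum.reindex_bij_betw[OF rot_bij[OF assms], of g] by simp

lemma rot_sum2: assumes "p < r" shows "(\<Sum>q<r. g (nat ((int q - int p) mod int r))) = (\<Sum>k<r. g k)"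
  using sum.reindex_bij_betw[OF rot_bij2[OF assms], of g] by simp



lemma mat_vec_sum:
  assumes "A \<in> carrier_mat n n" "v \<in> carrier_vec n" "i < n"
  shows "(A *\<^sub>v v) $ i = (\<Sum>j<n. A $$ (i,j) * v $ j)"
  using assms by (simp add: scalar_prod_def atLeast0LessThan)

lemma nonneg_mono:
  fixes A :: "real mat"
  assumes A: "A \<in> carrier_mat n n" and nn: "\<forall>i<n. \<forall>j<n. 0 \<le> A$$(i,j)"
  and v: "v \<in> carrier_vec n" and w: "w \<in> carrier_vec n" and le: "\<forall>i<n. v$i \<le> w$i"
  shows "\<forall>i<n. (A *\<^sub>v v)$i \<le> (A *\<^sub>v w)$i"
proof (intro allI impI)
  fix i assume i: "i < n"
  show "(A *\<^sub>v v)$i \<le> (A *\<^sub>v w)$i"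
    unfolding mat_vec_sum[OF A v i] mat_vec_sum[OF A w i]
    by (rule sum_mono, rule mult_left_mono, insert nn le i, auto)
qed

lemma pow_nonneg:
  fixes A :: "real mat"
  assumes A: "A \<in> carrier_mat n n" and nn: "\<forall>i<n. \<forall>j<n. 0 \<le> A$$(i,j)"
  shows "\<forall>i<n. \<forall>j<n. 0 \<le> (A ^\<^sub>m k)$$(i,j)"
proof (induct k)
  case 0
  then show ?case using A by auto
next
  case (Suc k)
  show ?case
  proof (intro allI impI)
    fix i j assume i: "i < n" and j: "j < n"
    have "(A ^\<^sub>m Suc k) $$ (i,j) = (\<Sum>l\<in>{0..<n}. (A ^\<^sub>m k) $$ (i,l) * A $$ (l,j))"
      using A i j by (simp add: scalar_prod_def)
    also have "\<dots> \<ge> 0" using Suc nn i j by (intro sum_nonneg mult_nonneg_nonneg, auto)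
    finally show "0 \<le> (A ^\<^sub>m Suc k) $$ (i,j)" .
  qed
qed

lemma cw:
  fixes S :: "real mat" and u :: "real vec"
  assumes S: "S \<in> carrier_mat s s" and s: "0 < s" and nn: "\<forall>i<s. \<forall>j<s. 0 \<le> S$$(i,j)"
  and u: "u \<in> carrier_vec s" and unn: "\<forall>i<s. 0 \<le> u$i" and a: "a < s" and ua: "0 < u$a"
  and ineq: "\<forall>i<s. \<mu> * u$i \<le> (S *\<^sub>v u)$i"
  shows "\<mu> \<le> real_spectral_radius S"
proof (rule ccontr)
  assume "\<not> ?thesis" hence lt: "real_spectral_radius S < \<mu>" by simp
  define N where "N = map_mat complex_of_real S"
  have N: "N \<in> carrier_mat s s" using S by (simp add: N_def)
  define \<rho> where "\<rho> = real_spectral_radius S"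
  have \<rho>N: "\<rho> = spectral_radius N" by (simp add: \<rho>_def N_def real_spectral_radius_def)
  have "\<rho> \<in> norm ` spectrum N" using spectral_radius_mem_max(1)[OF N s] \<rho>N by simp
  hence \<rho>0: "0 \<le> \<rho>" by auto
  define c where "c = (\<rho> + \<mu>)/2"
  have c: "0 < c" "\<rho> < c" "c < \<mu>" using \<rho>0 lt by (auto simp: c_def \<rho>_def)
  define T where "T = (1/c) \<cdot>\<^sub>m S"
  have T: "T \<in> carrier_mat s s" using S by (simp add: T_def)
  define TC where "TC = map_mat complex_of_real T"
  have TC: "TC \<in> carrier_mat s s" using T by (simp add: TC_def)
  have TCN: "N = complex_of_real c \<cdot>\<^sub>m TC"
    by (rule eq_matI, insert S c, auto simp: N_def TC_def T_def)
  have "spectral_radius TC < 1"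
  proof -
    have "spectral_radius TC \<in> norm ` spectrum TC" by (rule spectral_radius_mem_max(1)[OF TC s])
    then obtain \<nu> where ev: "eigenvalue TC \<nu>" and eq: "spectral_radius TC = norm \<nu>"
      by (auto simp: spectrum_def)
    then obtain v where evv: "eigenvector TC v \<nu>" by (auto simp: eigenvalue_def)
    hence v: "v \<in> carrier_vec s" "v \<noteq> 0\<^sub>v s" "TC *\<^sub>v v = \<nu> \<cdot>\<^sub>v v" using TC by (auto simp: eigenvector_def)
    have "N *\<^sub>v v = complex_of_real c \<cdot>\<^sub>v (TC *\<^sub>v v)"
      by (rule eq_vecI, insert TC v(1), auto simp: TCN scalar_prod_def sum_distrib_left mult.assoc)
    also have "\<dots> = (complex_of_real c * \<nu>) \<cdot>\<^sub>v v" using v by (simp add: smult_smult_assoc)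
    finally have "eigenvector N v (complex_of_real c * \<nu>)" using v N by (auto simp: eigenvector_def)
    hence "eigenvalue N (complex_of_real c * \<nu>)" unfolding eigenvalue_def by blast
    hence "norm (complex_of_real c * \<nu>) \<in> norm ` spectrum N" unfolding spectrum_def by blast
    hence "norm (complex_of_real c * \<nu>) \<le> \<rho>" using spectral_radius_mem_max(2)[OF N s] \<rho>N by simp
    hence "c * norm \<nu> \<le> \<rho>" using c by (simp add: norm_mult)
    hence "c * norm \<nu> < c * 1" using c by linarith
    hence "norm \<nu> < 1" using c(1) mult_less_cancel_left_pos by blast
    thus ?thesis using eq by simp
  qed
  from spectral_radius_jnf_norm_bound_less_1_upper_triangular[OF TC this]
  obtain C where C: "\<And>k. norm_bound (TC ^\<^sub>m k) C" by auto
  have Cb: "\<bar>(T ^\<^sub>m k)$$(i,j)\<bar> \<le> C" if i: "i<s" and j: "j<s" for k i j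
  proof -
    have "TC ^\<^sub>m k = map_mat complex_of_real (T ^\<^sub>m k)"
      unfolding TC_def by (rule of_real_hom.mat_hom_pow[OF T, symmetric])
    then have "norm ((TC ^\<^sub>m k) $$ (i,j)) = \<bar>(T ^\<^sub>m k)$$(i,j)\<bar>" using i j T by simp
    moreover have "norm ((TC ^\<^sub>m k) $$ (i,j)) \<le> C" using C[of k] i j TC unfolding norm_bound_def by simp
    ultimately show ?thesis by simp
  qed
  define x where "x = \<mu> / c"
  have x1: "1 < x" using c by (simp add: x_def)
  have Tnn: "\<forall>i<s. \<forall>j<s. 0 \<le> T$$(i,j)" using c nn S by (simp add: T_def)
  have Tu: "\<forall>i<s. x * u$i \<le> (T *\<^sub>v u)$i"
  proof (intro allI impI)
    fix i assume i: "i < s"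
    have "(T *\<^sub>v u)$i = (1/c) * (S *\<^sub>v u)$i"
      unfolding mat_vec_sum[OF T u i] mat_vec_sum[OF S u i] using S i
      by (simp add: T_def sum_distrib_left mult.assoc)
    moreover have "(1/c) * (\<mu> * u$i) \<le> (1/c) * (S *\<^sub>v u)$i"
      using ineq i c by (intro mult_left_mono, auto)
    ultimately show "x * u$i \<le> (T *\<^sub>v u)$i" by (simp add: x_def)
  qed
  have pow: "\<forall>i<s. x^k * u$i \<le> (T ^\<^sub>m k *\<^sub>v u)$i" for k
  proof (induct k)
    case 0
    then show ?case using u T by simp
  next
    case (Suc k)
    have PT: "T ^\<^sub>m k \<in> carrier_mat s s" using T by simp
    have e: "T ^\<^sub>m Suc k *\<^sub>v u = T ^\<^sub>m k *\<^sub>v (T *\<^sub>v u)" using assoc_mult_mat_vec[OF PT T u] by simp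
    have m1: "\<forall>i<s. (T ^\<^sub>m k *\<^sub>v (x \<cdot>\<^sub>v u))$i \<le> (T ^\<^sub>m k *\<^sub>v (T *\<^sub>v u))$i"
      by (rule nonneg_mono[OF PT pow_nonneg[OF T Tnn]], insert u T Tu, auto)
    have m2: "T ^\<^sub>m k *\<^sub>v (x \<cdot>\<^sub>v u) = x \<cdot>\<^sub>v (T ^\<^sub>m k *\<^sub>v u)" by (rule mult_mat_vec[OF PT u])
    show ?case
    proof (intro allI impI)
      fix i assume i: "i < s"
      have "x ^ Suc k * u $ i = x * (x^k * u$i)" by simp
      also have "\<dots> \<le> x * (T ^\<^sub>m k *\<^sub>v u)$i" using Suc i x1 by (intro mult_left_mono, auto)
      also have "\<dots> = (T ^\<^sub>m k *\<^sub>v (x \<cdot>\<^sub>v u))$i" using m2 i T by simp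
      also have "\<dots> \<le> (T ^\<^sub>m Suc k *\<^sub>v u)$i" using m1 i e by simp
      finally show "x ^ Suc k * u $ i \<le> (T ^\<^sub>m Suc k *\<^sub>v u)$i" .
    qed
  qed
  define D where "D = C * (\<Sum>j<s. u$j)"
  have bnd: "x^k * u$a \<le> D" for k
  proof -
    have "x^k * u$a \<le> (T ^\<^sub>m k *\<^sub>v u)$a" using pow a by auto
    also have "\<dots> = (\<Sum>j<s. (T ^\<^sub>m k) $$ (a,j) * u $ j)" using T u a by (intro mat_vec_sum, auto)
    also have "\<dots> \<le> (\<Sum>j<s. C * u $ j)"
    proof (rule sum_mono)
      fix j assume j: "j \<in> {..<s}"
      have "(T ^\<^sub>m k) $$ (a,j) \<le> C" using Cb[of a j k] a j by auto
      thus "(T ^\<^sub>m k) $$ (a,j) * u $ j \<le> C * u $ j" using unn j by (intro mult_right_mono, auto)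
    qed
    also have "\<dots> = D" by (simp add: D_def sum_distrib_left)
    finally show ?thesis .
  qed
  obtain k where "D / u$a < x^k" using real_arch_pow[OF x1] by blast
  hence "D < x^k * u$a" using ua by (simp add: divide_less_eq)
  with bnd[of k] show False by simp
qed


lemma idx_lt: assumes "p < (r::nat)" "a < s" shows "p*s+a < r*s"
proof -
  have "Suc p * s \<le> r * s" using assms by (intro mult_le_mono1, simp)
  thus ?thesis using assms by simp
qed

theorem lemma3p4:
  fixes r s :: nat and B :: "nat \<Rightarrow> real mat"
  assumes "r \<ge> 1" and "s \<ge> 1"
    and "\<And>k. k < r \<Longrightarrow> B k \<in> carrier_mat s s"
    and "\<And>k i j. k < r \<Longrightarrow> i < s \<Longrightarrow> j < s \<Longrightarrow> B k $$ (i, j) \<ge> 0"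
  shows "real_spectral_radius (block_circulant r s B)
         = real_spectral_radius (mat s s (\<lambda>(i, j). \<Sum>k<r. B k $$ (i, j)))"
proof -
  note r = assms(1) and s1 = assms(2) and Bc = assms(3) and Bnn = assms(4)
  have s: "0 < s" using s1 by simp
  have rs: "0 < r*s" using r s by simp
  define A where "A = block_circulant r s B"
  define S where "S = mat s s (\<lambda>(i, j). \<Sum>k<r. B k $$ (i, j))"
  define rot where "rot = (\<lambda>p q. nat ((int q - int p) mod int r))"
  have rot: "rot p q < r" for p q using r by (auto simp: rot_def nat_less_iff)
  have A: "A \<in> carrier_mat (r*s) (r*s)" by (simp add: A_def block_circulant_def)
  have S: "S \<in> carrier_mat s s" by (simp add: S_def)
  have Sent: "S $$ (a,b) = (\<Sum>k<r. B k $$ (a, b))" if "a<s" "b<s" for a b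
    using that by (simp add: S_def)
  have Aent: "A $$ (p*s+a, q*s+b) = B (rot p q) $$ (a,b)"
    if "p<r" "a<s" "q<r" "b<s" for p a q b
    using that idx_lt[of p r a s] idx_lt[of q r b s] by (simp add: A_def block_circulant_def rot_def)
  have Ann: "0 \<le> A $$ (i,j)" if "i < r*s" "j < r*s" for i j
    using that Bnn[OF rot[of "i div s" "j div s"], of "i mod s" "j mod s"] s
    by (simp add: A_def block_circulant_def rot_def)
  have Snn: "\<forall>i<s. \<forall>j<s. 0 \<le> S$$(i,j)" using Bnn by (auto simp: S_def intro: sum_nonneg)
  have divmod: "i = (i div s) * s + i mod s" "i div s < r" "i mod s < s" if "i < r*s" for i
    using that s by (auto simp: less_mult_imp_div_less mult.commute)
  define MC where "MC = map_mat complex_of_real A"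
  define NC where "NC = map_mat complex_of_real S"
  have MC: "MC \<in> carrier_mat (r*s) (r*s)" using A by (simp add: MC_def)
  have NC: "NC \<in> carrier_mat s s" using S by (simp add: NC_def)
  have ge: "real_spectral_radius S \<le> real_spectral_radius A"
  proof -
    have "spectral_radius NC \<in> norm ` spectrum NC" by (rule spectral_radius_mem_max(1)[OF NC s])
    then obtain lam where ev: "eigenvalue NC lam" and eq: "spectral_radius NC = norm lam"
      by (auto simp: spectrum_def)
    then obtain v where "eigenvector NC v lam" by (auto simp: eigenvalue_def)
    hence v: "v \<in> carrier_vec s" "v \<noteq> 0\<^sub>v s" "NC *\<^sub>v v = lam \<cdot>\<^sub>v v" using NC by (auto simp: eigenvector_def)
    define w where "w = vec (r*s) (\<lambda>i. v $ (i mod s))"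
    have w: "w \<in> carrier_vec (r*s)" by (simp add: w_def)
    have "MC *\<^sub>v w = lam \<cdot>\<^sub>v w"
    proof (rule eq_vecI)
      show "dim_vec (MC *\<^sub>v w) = dim_vec (lam \<cdot>\<^sub>v w)" using MC w by simp
      fix i assume "i < dim_vec (lam \<cdot>\<^sub>v w)"
      hence i: "i < r*s" using w by simp
      define p where "p = i div s"
      define a where "a = i mod s"
      have ip: "i = p*s+a" "p < r" "a < s" using divmod[OF i] by (auto simp: p_def a_def)
      have "(MC *\<^sub>v w) $ i = (\<Sum>j<r*s. MC $$ (i,j) * w $ j)" by (rule mat_vec_sum[OF MC w i])
      also have "\<dots> = (\<Sum>q<r. \<Sum>b<s. MC $$ (i,q*s+b) * w $ (q*s+b))" by (rule block_sum)
      also have "\<dots> = (\<Sum>q<r. \<Sum>b<s. complex_of_real (B (rot p q) $$ (a,b)) * v $ b)"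
      proof (intro sum.cong refl)
        fix q b assume q: "q \<in> {..<r}" and b: "b \<in> {..<s}"
        have qb: "q*s+b < r*s" using idx_lt[of q r b s] q b by simp
        have "MC $$ (i,q*s+b) = complex_of_real (A $$ (i,q*s+b))"
          using A qb i by (simp add: MC_def)
        also have "\<dots> = complex_of_real (B (rot p q) $$ (a,b))" using Aent[of p a q b] ip q b by simp
        finally show "MC $$ (i,q*s+b) * w $ (q*s+b) = complex_of_real (B (rot p q) $$ (a,b)) * v $ b"
          using qb b by (simp add: w_def)
      qed
      also have "\<dots> = (\<Sum>b<s. \<Sum>q<r. complex_of_real (B (rot p q) $$ (a,b)) * v $ b)" by (rule sum.swap)
      also have "\<dots> = (\<Sum>b<s. \<Sum>k<r. complex_of_real (B k $$ (a,b)) * v $ b)"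
        unfolding rot_def by (intro sum.cong refl rot_sum2[OF ip(2)])
      also have "\<dots> = (\<Sum>b<s. NC $$ (a,b) * v $ b)"
        by (intro sum.cong refl, insert ip S, auto simp: NC_def Sent sum_distrib_right)
      also have "\<dots> = (NC *\<^sub>v v) $ a" by (rule mat_vec_sum[OF NC v(1) ip(3), symmetric])
      also have "\<dots> = lam * w $ i" using v ip i by (simp add: w_def)
      finally show "(MC *\<^sub>v w) $ i = (lam \<cdot>\<^sub>v w) $ i" using i w by simp
    qed
    moreover have "w \<noteq> 0\<^sub>v (r*s)"
    proof
      assume w0: "w = 0\<^sub>v (r*s)"
      have "v = 0\<^sub>v s"
      proof (rule eq_vecI)
        fix a assume "a < dim_vec (0\<^sub>v s)"
        hence a: "a < s" by simp
        have "a < r*s" using idx_lt[of 0 r a s] r a by simp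
        hence "w $ a = 0" using w0 by simp
        thus "v $ a = 0\<^sub>v s $ a" using a \<open>a < r*s\<close> by (simp add: w_def)
      qed (use v in simp)
      with v(2) show False by simp
    qed
    ultimately have "eigenvector MC w lam" using w MC by (auto simp: eigenvector_def)
    hence "eigenvalue MC lam" unfolding eigenvalue_def by blast
    hence "norm lam \<in> norm ` spectrum MC" unfolding spectrum_def by blast
    hence "norm lam \<le> spectral_radius MC" by (rule spectral_radius_mem_max(2)[OF MC rs])
    thus ?thesis using eq by (simp add: real_spectral_radius_def MC_def NC_def)
  qed
  have le: "real_spectral_radius A \<le> real_spectral_radius S"
  proof -
    have "spectral_radius MC \<in> norm ` spectrum MC" by (rule spectral_radius_mem_max(1)[OF MC rs])
    then obtain lam where ev: "eigenvalue MC lam" and eq: "spectral_radius MC = norm lam"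
      by (auto simp: spectrum_def)
    then obtain w where "eigenvector MC w lam" by (auto simp: eigenvalue_def)
    hence w: "w \<in> carrier_vec (r*s)" "w \<noteq> 0\<^sub>v (r*s)" "MC *\<^sub>v w = lam \<cdot>\<^sub>v w" using MC by (auto simp: eigenvector_def)
    define u where "u = vec s (\<lambda>a. \<Sum>p<r. norm (w $ (p*s+a)))"
    have u: "u \<in> carrier_vec s" by (simp add: u_def)
    have unn: "\<forall>i<s. 0 \<le> u$i" by (simp add: u_def sum_nonneg)
    obtain i where i: "i < r*s" "w $ i \<noteq> 0"
      using w(1,2) by (metis carrier_vecD eq_vecI index_zero_vec(1) index_zero_vec(2))
    define p0 where "p0 = i div s"
    define a0 where "a0 = i mod s"
    have ip: "i = p0*s+a0" "p0 < r" "a0 < s" using divmod[OF i(1)] by (auto simp: p0_def a0_def)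
    have ua: "0 < u $ a0"
    proof -
      have "norm (w $ (p0*s+a0)) \<le> (\<Sum>p<r. norm (w $ (p*s+a0)))"
        by (rule member_le_sum[of p0 "{..<r}" "\<lambda>p. norm (w $ (p*s+a0))"], insert ip, auto)
      moreover have "0 < norm (w $ (p0*s+a0))" using i ip by simp
      ultimately have "0 < (\<Sum>p<r. norm (w $ (p*s+a0)))" by linarith
      thus ?thesis using ip by (simp add: u_def)
    qed
    have ineq: "\<forall>a<s. norm lam * u$a \<le> (S *\<^sub>v u)$a"
    proof (intro allI impI)
      fix a assume a: "a < s"
      have "norm lam * u$a = (\<Sum>p<r. norm ((MC *\<^sub>v w) $ (p*s+a)))"
        using a w(3) w(1) idx_lt[of _ r a s] by (simp add: u_def sum_distrib_left norm_mult)
      also have "\<dots> \<le> (\<Sum>p<r. \<Sum>j<r*s. A $$ (p*s+a,j) * norm (w $ j))"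
      proof (rule sum_mono)
        fix p assume p: "p \<in> {..<r}"
        have pi: "p*s+a < r*s" using idx_lt[of p r a s] p a by simp
        have "norm ((MC *\<^sub>v w) $ (p*s+a)) = norm (\<Sum>j<r*s. MC $$ (p*s+a,j) * w $ j)"
          by (simp add: mat_vec_sum[OF MC w(1) pi])
        also have "\<dots> \<le> (\<Sum>j<r*s. norm (MC $$ (p*s+a,j) * w $ j))" by (rule norm_sum)
        also have "\<dots> = (\<Sum>j<r*s. A $$ (p*s+a,j) * norm (w $ j))"
          by (intro sum.cong refl, insert pi Ann A, auto simp: MC_def norm_mult)
        finally show "norm ((MC *\<^sub>v w) $ (p*s+a)) \<le> (\<Sum>j<r*s. A $$ (p*s+a,j) * norm (w $ j))" .
      qed
      also have "\<dots> = (\<Sum>p<r. \<Sum>q<r. \<Sum>b<s. B (rot p q) $$ (a,b) * norm (w $ (q*s+b)))"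
      proof -
        have X: "(\<Sum>j<r*s. A $$ (p*s+a,j) * norm (w $ j)) = (\<Sum>q<r. \<Sum>b<s. B (rot p q) $$ (a,b) * norm (w $ (q*s+b)))"
          if p: "p < r" for p
          unfolding block_sum[of "\<lambda>j. A $$ (p*s+a,j) * norm (w $ j)"]
          using Aent a p by (intro sum.cong refl) auto
        show ?thesis by (intro sum.cong refl X) simp
      qed
      also have "\<dots> = (\<Sum>q<r. \<Sum>b<s. \<Sum>p<r. B (rot p q) $$ (a,b) * norm (w $ (q*s+b)))"
        by (subst sum.swap, rule sum.cong[OF refl], rule sum.swap)
      also have "\<dots> = (\<Sum>q<r. \<Sum>b<s. S $$ (a,b) * norm (w $ (q*s+b)))"
      proof (intro sum.cong refl)
        fix q b assume q: "q \<in> {..<r}" and b: "b \<in> {..<s}"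
        have "(\<Sum>p<r. B (rot p q) $$ (a,b) * norm (w $ (q*s+b)))
              = (\<Sum>p<r. B (rot p q) $$ (a,b)) * norm (w $ (q*s+b))" by (simp add: sum_distrib_right)
        also have "(\<Sum>p<r. B (rot p q) $$ (a,b)) = (\<Sum>k<r. B k $$ (a,b))"
          unfolding rot_def using rot_sum1[of q r "\<lambda>k. B k $$ (a,b)"] q by simp
        finally show "(\<Sum>p<r. B (rot p q) $$ (a,b) * norm (w $ (q*s+b))) = S $$ (a,b) * norm (w $ (q*s+b))"
          using a b by (simp add: Sent)
      qed
      also have "\<dots> = (\<Sum>b<s. S $$ (a,b) * u $ b)"
        by (subst sum.swap, intro sum.cong refl, simp add: u_def sum_distrib_left)
      also have "\<dots> = (S *\<^sub>v u) $ a" by (rule mat_vec_sum[OF S u a, symmetric])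
      finally show "norm lam * u$a \<le> (S *\<^sub>v u)$a" .
    qed
    have "norm lam \<le> real_spectral_radius S" by (rule cw[OF S s Snn u unn ip(3) ua ineq])
    thus ?thesis using eq by (simp add: real_spectral_radius_def MC_def)
  qed
  show ?thesis using ge le by (simp add: A_def S_def)
qed

end
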